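(* Let $R$ be a ring with identity and let $e$ be an idempotent of $R$. If $R$ is SSP, then the ring $eRe$ (with identity $e$) is also SSP.
   Context: Rings are associative with identity. A ring $S$ is right SSP if the sum of any two direct summands of the right module $S_S$ is again a direct summand of $S_S$; left SSP is defined analogously with ${}_SS$; $S$ is SSP if it is both right and left SSP. (Right SSP and left SSP are equivalent conditions.) *)

theory Defs
  imports "HOL-Algebra.AbelCoset"
begin

definition right_ideal_of :: "('a, 'b) ring_scheme \<Rightarrow> 'a set \<Rightarrow> bool" where
  "right_ideal_of R I \<longleftrightarrow> additive_subgroup I R \<and>
     (\<forall>x\<in>I. \<forall>r\<in>carrier R. x \<otimes>\<^bsub>R\<^esub> r \<in> I)"

definition left_ideal_of :: "('a, 'b) ring_scheme \<Rightarrow> 'a set \<Rightarrow> bool" where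
  "left_ideal_of R I \<longleftrightarrow> additive_subgroup I R \<and>
     (\<forall>x\<in>I. \<forall>r\<in>carrier R. r \<otimes>\<^bsub>R\<^esub> x \<in> I)"

definition sum_set :: "('a, 'b) ring_scheme \<Rightarrow> 'a set \<Rightarrow> 'a set \<Rightarrow> 'a set" where
  "sum_set R I J = {x \<oplus>\<^bsub>R\<^esub> y | x y. x \<in> I \<and> y \<in> J}"

definition right_summand :: "('a, 'b) ring_scheme \<Rightarrow> 'a set \<Rightarrow> bool" where
  "right_summand R I \<longleftrightarrow> right_ideal_of R I \<and>
     (\<exists>J. right_ideal_of R J \<and> sum_set R I J = carrier R \<and> I \<inter> J = {\<zero>\<^bsub>R\<^esub>})"

definition left_summand :: "('a, 'b) ring_scheme \<Rightarrow> 'a set \<Rightarrow> bool" where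
  "left_summand R I \<longleftrightarrow> left_ideal_of R I \<and>
     (\<exists>J. left_ideal_of R J \<and> sum_set R I J = carrier R \<and> I \<inter> J = {\<zero>\<^bsub>R\<^esub>})"

definition right_SSP :: "('a, 'b) ring_scheme \<Rightarrow> bool" where
  "right_SSP R \<longleftrightarrow> (\<forall>A B. right_summand R A \<longrightarrow> right_summand R B \<longrightarrow>
      right_summand R (sum_set R A B))"

definition left_SSP :: "('a, 'b) ring_scheme \<Rightarrow> bool" where
  "left_SSP R \<longleftrightarrow> (\<forall>A B. left_summand R A \<longrightarrow> left_summand R B \<longrightarrow>
      left_summand R (sum_set R A B))"

definition SSP :: "('a, 'b) ring_scheme \<Rightarrow> bool" where
  "SSP R \<longleftrightarrow> right_SSP R \<and> left_SSP R"

definition corner :: "('a, 'b) ring_scheme \<Rightarrow> 'a \<Rightarrow> ('a, 'b) ring_scheme" where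
  "corner R e = R\<lparr>carrier := {e \<otimes>\<^bsub>R\<^esub> x \<otimes>\<^bsub>R\<^esub> e | x. x \<in> carrier R}, one := e\<rparr>"

end

theory Submission
  imports Defs
begin

lemma asg_intro:
  fixes R (structure)
  assumes "ring R" "I \<subseteq> carrier R" "\<zero> \<in> I"
    "\<And>x y. x \<in> I \<Longrightarrow> y \<in> I \<Longrightarrow> x \<oplus> y \<in> I"
    "\<And>x. x \<in> I \<Longrightarrow> \<ominus> x \<in> I"
  shows "additive_subgroup I R"
proof -
  interpret ring R by fact
  show ?thesis
    apply (rule additive_subgroupI)
    apply (rule group.subgroupI[OF a_group])
    using assms by (auto simp: a_inv_def[symmetric])
qed

lemma sub_iff:
  fixes R (structure)
  assumes "ring R" "additive_subgroup C R"
  shows "additive_subgroup I (R\<lparr>carrier := C, one := u\<rparr>) \<longleftrightarrow> additive_subgroup I R \<and> I \<subseteq> C"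
proof -
  interpret ring R by fact
  have eq: "add_monoid (R\<lparr>carrier := C, one := u\<rparr>) = (add_monoid R)\<lparr>carrier := C\<rparr>"
    by simp
  have sC: "subgroup C (add_monoid R)" using assms(2) additive_subgroup.a_subgroup by blast
  show ?thesis
  proof
    assume h: "additive_subgroup I (R\<lparr>carrier := C, one := u\<rparr>)"
    hence s: "subgroup I ((add_monoid R)\<lparr>carrier := C\<rparr>)" using eq additive_subgroup.a_subgroup by metis
    have "subgroup I (add_monoid R)" by (rule group.incl_subgroup[OF a_group sC s])
    moreover have "I \<subseteq> C" using subgroup.subset[OF s] by simp
    ultimately show "additive_subgroup I R \<and> I \<subseteq> C" by (simp add: additive_subgroupI)
  next
    assume h: "additive_subgroup I R \<and> I \<subseteq> C"
    have "subgroup I ((add_monoid R)\<lparr>carrier := C\<rparr>)"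
      by (rule group.subgroup_incl[OF a_group]) (use h sC additive_subgroup.a_subgroup in auto)
    thus "additive_subgroup I (R\<lparr>carrier := C, one := u\<rparr>)" by (simp add: eq additive_subgroupI)
  qed
qed

definition rideal where
  "rideal R C I \<longleftrightarrow> additive_subgroup I R \<and> I \<subseteq> C \<and> (\<forall>x\<in>I. \<forall>r\<in>C. x \<otimes>\<^bsub>R\<^esub> r \<in> I)"

definition rsum where
  "rsum R C I \<longleftrightarrow> rideal R C I \<and> (\<exists>J. rideal R C J \<and> sum_set R I J = C \<and> I \<inter> J = {\<zero>\<^bsub>R\<^esub>})"

lemma rsum_iff:
  fixes R (structure)
  assumes "ring R" "additive_subgroup C R"
  shows "right_summand (R\<lparr>carrier := C, one := u\<rparr>) I \<longleftrightarrow> rsum R C I"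
  unfolding right_summand_def rsum_def right_ideal_of_def rideal_def
  using sub_iff[OF assms] by (simp add: sum_set_def)


locale corn = ring R for R (structure) +
  fixes C u
  assumes C_sub: "additive_subgroup C R"
    and C_mult: "\<And>x y. x \<in> C \<Longrightarrow> y \<in> C \<Longrightarrow> x \<otimes> y \<in> C"
    and u_C: "u \<in> C"
    and u_l: "\<And>x. x \<in> C \<Longrightarrow> u \<otimes> x = x"
    and u_r: "\<And>x. x \<in> C \<Longrightarrow> x \<otimes> u = x"
begin

lemma C_car: "x \<in> C \<Longrightarrow> x \<in> carrier R"
  using additive_subgroup.a_subset[OF C_sub] by blast

lemma idem:
  assumes "rsum R C I"
  shows "\<exists>f\<in>C. f \<otimes> f = f \<and> I = (\<lambda>r. f \<otimes> r) ` C"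
proof -
  obtain J where I: "rideal R C I" and J: "rideal R C J" and S: "sum_set R I J = C"
    and Z: "I \<inter> J = {\<zero>}" using assms unfolding rsum_def by blast
  have Is: "additive_subgroup I R" "I \<subseteq> C" "\<And>x r. x\<in>I \<Longrightarrow> r\<in>C \<Longrightarrow> x \<otimes> r \<in> I"
    using I unfolding rideal_def by auto
  have Js: "additive_subgroup J R" "J \<subseteq> C" "\<And>x r. x\<in>J \<Longrightarrow> r\<in>C \<Longrightarrow> x \<otimes> r \<in> J"
    using J unfolding rideal_def by auto
  obtain a b where ab: "u = a \<oplus> b" "a \<in> I" "b \<in> J" using u_C S unfolding sum_set_def by blast
  have aC: "a \<in> C" "b \<in> C" using ab Is Js by auto
  have key: "x = a \<otimes> x" if x: "x \<in> I" for x
  proof -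
    have xC: "x \<in> C" using x Is by auto
    have xr: "x \<in> carrier R" "a \<in> carrier R" "b \<in> carrier R" using xC aC C_car by auto
    have e1: "x = a \<otimes> x \<oplus> b \<otimes> x" using u_l[OF xC] ab(1) xr l_distr by metis
    have ax: "a \<otimes> x \<in> I" using Is(3)[OF ab(2) xC] .
    have bx: "b \<otimes> x \<in> J" using Js(3)[OF ab(3) xC] .
    have "b \<otimes> x = x \<oplus> \<ominus> (a \<otimes> x)"
      using e1 xr by (metis a_comm a_minus_def add.inv_solve_right m_closed minus_equality r_neg1)
    hence "b \<otimes> x \<in> I" using ax x additive_subgroup.a_closed[OF Is(1)] additive_subgroup.a_inv_closed[OF Is(1)] by simp
    hence "b \<otimes> x = \<zero>" using bx Z by blast
    thus ?thesis using e1 xr by simp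
  qed
  have "a \<otimes> a = a" using key[OF ab(2)] by simp
  moreover have "I = (\<lambda>r. a \<otimes> r) ` C"
  proof
    show "I \<subseteq> (\<lambda>r. a \<otimes> r) ` C" using key Is(2) by blast
    show "(\<lambda>r. a \<otimes> r) ` C \<subseteq> I" using Is(3)[OF ab(2)] by blast
  qed
  ultimately show ?thesis using aC by blast
qed

lemma rideal_gen:
  assumes f: "f \<in> C"
  shows "rideal R C ((\<lambda>r. f \<otimes> r) ` C)"
  unfolding rideal_def
proof (intro conjI ballI)
  have fr: "f \<in> carrier R" using f C_car by auto
  show "additive_subgroup ((\<lambda>r. f \<otimes> r) ` C) R"
  proof (rule asg_intro)
    show "ring R" by (rule ring_axioms)
    show "(\<lambda>r. f \<otimes> r) ` C \<subseteq> carrier R" using f C_mult C_car by auto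
    show "\<zero> \<in> (\<lambda>r. f \<otimes> r) ` C"
      using fr additive_subgroup.zero_closed[OF C_sub] by (auto intro!: image_eqI[of _ _ \<zero>])
    show "x \<oplus> y \<in> (\<lambda>r. f \<otimes> r) ` C" if xx: "x \<in> (\<lambda>r. f \<otimes> r) ` C" "y \<in> (\<lambda>r. f \<otimes> r) ` C" for x y
    proof -
      obtain s t where "s \<in> C" "t \<in> C" "x = f \<otimes> s" "y = f \<otimes> t" using xx by blast
      thus ?thesis using fr C_car additive_subgroup.a_closed[OF C_sub]
        by (auto intro!: image_eqI[of _ _ "s \<oplus> t"] simp: r_distr)
    qed
    show "\<ominus> x \<in> (\<lambda>r. f \<otimes> r) ` C" if xx: "x \<in> (\<lambda>r. f \<otimes> r) ` C" for x
    proof -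
      obtain s where "s \<in> C" "x = f \<otimes> s" using xx by blast
      thus ?thesis using fr C_car additive_subgroup.a_inv_closed[OF C_sub]
        by (auto intro!: image_eqI[of _ _ "\<ominus> s"] simp: r_minus)
    qed
  qed
  show "(\<lambda>r. f \<otimes> r) ` C \<subseteq> C" using f C_mult by auto
  show "x \<otimes> r \<in> (\<lambda>r. f \<otimes> r) ` C" if xx: "x \<in> (\<lambda>r. f \<otimes> r) ` C" and rr: "r \<in> C" for x r
  proof -
    obtain s where "s \<in> C" "x = f \<otimes> s" using xx by blast
    thus ?thesis using fr C_car C_mult rr
      by (auto intro!: image_eqI[of _ _ "s \<otimes> r"] simp: m_assoc)
  qed
qed

lemma summand_gen:
  assumes f: "f \<in> C" and ff: "f \<otimes> f = f"
  shows "rsum R C ((\<lambda>r. f \<otimes> r) ` C)"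
  unfolding rsum_def
proof (intro conjI exI)
  have fr: "f \<in> carrier R" using f C_car by auto
  define g where "g = u \<ominus> f"
  have gC: "g \<in> C" unfolding g_def a_minus_def
    using f u_C additive_subgroup.a_closed[OF C_sub] additive_subgroup.a_inv_closed[OF C_sub] by auto
  have ur: "u \<in> carrier R" using u_C C_car by auto
  show "rideal R C ((\<lambda>r. f \<otimes> r) ` C)" by (rule rideal_gen[OF f])
  show "rideal R C ((\<lambda>r. g \<otimes> r) ` C)" by (rule rideal_gen[OF gC])
  show "sum_set R ((\<lambda>r. f \<otimes> r) ` C) ((\<lambda>r. g \<otimes> r) ` C) = C"
  proof
    show "sum_set R ((\<lambda>r. f \<otimes> r) ` C) ((\<lambda>r. g \<otimes> r) ` C) \<subseteq> C"
      unfolding sum_set_def using f gC C_mult additive_subgroup.a_closed[OF C_sub] by auto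
    show "C \<subseteq> sum_set R ((\<lambda>r. f \<otimes> r) ` C) ((\<lambda>r. g \<otimes> r) ` C)"
    proof
      fix x assume x: "x \<in> C"
      have xr: "x \<in> carrier R" using x C_car by auto
      have "f \<otimes> x \<oplus> g \<otimes> x = u \<otimes> x"
      proof -
        have "g \<otimes> x = u \<otimes> x \<oplus> \<ominus> (f \<otimes> x)" unfolding g_def a_minus_def using fr ur xr
          by (simp add: l_distr l_minus)
        hence "f \<otimes> x \<oplus> g \<otimes> x = u \<otimes> x \<oplus> (f \<otimes> x \<oplus> \<ominus> (f \<otimes> x))"
          using fr ur xr a_lcomm[of "f \<otimes> x" "u \<otimes> x" "\<ominus> (f \<otimes> x)"] by simp
        thus ?thesis using fr ur xr by (simp add: r_neg)
      qed
      hence "x = f \<otimes> x \<oplus> g \<otimes> x" using u_l[OF x] by simp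
      thus "x \<in> sum_set R ((\<lambda>r. f \<otimes> r) ` C) ((\<lambda>r. g \<otimes> r) ` C)"
        unfolding sum_set_def using x by blast
    qed
  qed
  show "(\<lambda>r. f \<otimes> r) ` C \<inter> (\<lambda>r. g \<otimes> r) ` C = {\<zero>}"
  proof
    show "{\<zero>} \<subseteq> (\<lambda>r. f \<otimes> r) ` C \<inter> (\<lambda>r. g \<otimes> r) ` C"
      using fr gC C_car additive_subgroup.zero_closed[OF C_sub] by (auto intro!: image_eqI[of _ _ \<zero>])
    show "(\<lambda>r. f \<otimes> r) ` C \<inter> (\<lambda>r. g \<otimes> r) ` C \<subseteq> {\<zero>}"
    proof
      fix y assume "y \<in> (\<lambda>r. f \<otimes> r) ` C \<inter> (\<lambda>r. g \<otimes> r) ` C"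
      then obtain s t where st: "s \<in> C" "t \<in> C" "y = f \<otimes> s" "y = g \<otimes> t" by blast
      have sr: "s \<in> carrier R" "t \<in> carrier R" using st C_car by auto
      have "f \<otimes> y = y" using st(3) fr sr ff by (simp add: m_assoc[symmetric])
      moreover have "f \<otimes> g = \<zero>" unfolding g_def a_minus_def
        using fr ur ff u_r[OF f] by (simp add: r_distr r_minus r_neg)
      hence "f \<otimes> y = \<zero>" using st(4) fr sr gC C_car by (simp add: m_assoc[symmetric])
      ultimately show "y \<in> {\<zero>}" by simp
    qed
  qed
qed

end

lemma corner_C:
  fixes R (structure)
  assumes "ring R" "e \<in> carrier R" "e \<otimes> e = e"
  shows "{e \<otimes> x \<otimes> e | x. x \<in> carrier R} = {z \<in> carrier R. e \<otimes> z = z \<and> z \<otimes> e = z}"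
proof -
  interpret ring R by fact
  show ?thesis
  proof (intro equalityI subsetI)
    fix z assume "z \<in> {e \<otimes> x \<otimes> e | x. x \<in> carrier R}"
    then obtain x where x: "x \<in> carrier R" "z = e \<otimes> x \<otimes> e" by blast
    thus "z \<in> {z \<in> carrier R. e \<otimes> z = z \<and> z \<otimes> e = z}"
      using assms by (simp add: m_assoc[symmetric]) (simp add: m_assoc)
  next
    fix z assume "z \<in> {z \<in> carrier R. e \<otimes> z = z \<and> z \<otimes> e = z}"
    thus "z \<in> {e \<otimes> x \<otimes> e | x. x \<in> carrier R}" by force
  qed
qed

lemma corn_corner:
  fixes R (structure)
  assumes "ring R" "e \<in> carrier R" "e \<otimes> e = e"
  shows "corn R {z \<in> carrier R. e \<otimes> z = z \<and> z \<otimes> e = z} e"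
proof -
  interpret ring R by fact
  have a: "additive_subgroup {z \<in> carrier R. e \<otimes> z = z \<and> z \<otimes> e = z} R"
      apply (rule asg_intro[OF assms(1)])
      using assms by (auto simp: r_distr l_distr r_minus l_minus)
  have b: "x \<otimes> y \<in> {z \<in> carrier R. e \<otimes> z = z \<and> z \<otimes> e = z}"
      if "x \<in> {z \<in> carrier R. e \<otimes> z = z \<and> z \<otimes> e = z}" "y \<in> {z \<in> carrier R. e \<otimes> z = z \<and> z \<otimes> e = z}" for x y
  proof -
    have x: "x \<in> carrier R" "e \<otimes> x = x" "x \<otimes> e = x" and y: "y \<in> carrier R" "e \<otimes> y = y" "y \<otimes> e = y" using that by auto
    have "e \<otimes> (x \<otimes> y) = (e \<otimes> x) \<otimes> y" by (rule m_assoc[symmetric]) (use x y assms in auto)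
    moreover have "x \<otimes> y \<otimes> e = x \<otimes> (y \<otimes> e)" by (rule m_assoc) (use x y assms in auto)
    ultimately show ?thesis using x y by simp
  qed
  show ?thesis
    by (rule corn.intro[OF assms(1) corn_axioms.intro[OF a b]]) (use assms in auto)
qed

lemma corn_full:
  fixes R (structure)
  assumes "ring R"
  shows "corn R (carrier R) \<one>"
proof -
  interpret ring R by fact
  show ?thesis
    by unfold_locales (auto intro: asg_intro[OF assms])
qed

lemma right_summand_full:
  fixes R (structure)
  assumes "ring R"
  shows "right_summand R I \<longleftrightarrow> rsum R (carrier R) I"
proof -
  interpret ring R by fact
  have "R\<lparr>carrier := carrier R, one := \<one>\<rparr> = R" by simp
  moreover have "additive_subgroup (carrier R) R" by (rule asg_intro[OF assms]) auto
  ultimately show ?thesis using rsum_iff[OF assms, of "carrier R" "\<one>" I] by simp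
qed


lemma right_main:
  fixes R (structure)
  assumes ring: "ring R" and e: "e \<in> carrier R" and ee: "e \<otimes> e = e" and ssp: "right_SSP R"
  shows "right_SSP (corner R e)"
proof -
  interpret ring R by fact
  define C where "C = {z \<in> carrier R. e \<otimes> z = z \<and> z \<otimes> e = z}"
  interpret cC: corn R C e unfolding C_def by (rule corn_corner[OF ring e ee])
  interpret cF: corn R "carrier R" \<one> by (rule corn_full[OF ring])
  have S: "corner R e = R\<lparr>carrier := C, one := e\<rparr>"
    unfolding corner_def C_def corner_C[OF ring e ee] ..
  have rsS: "right_summand (corner R e) I \<longleftrightarrow> rsum R C I" for I
    unfolding S by (rule rsum_iff[OF ring cC.C_sub])
  have rsR: "right_summand R I \<longleftrightarrow> rsum R (carrier R) I" for I
    by (rule right_summand_full[OF ring])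
  show ?thesis unfolding right_SSP_def
  proof (intro allI impI)
    fix A B assume A: "right_summand (corner R e) A" and B: "right_summand (corner R e) B"
    obtain f where f: "f \<in> C" "f \<otimes> f = f" "A = (\<lambda>r. f \<otimes> r) ` C"
      using cC.idem A rsS by blast
    obtain g where g: "g \<in> C" "g \<otimes> g = g" "B = (\<lambda>r. g \<otimes> r) ` C"
      using cC.idem B rsS by blast
    have fc: "f \<in> carrier R" "e \<otimes> f = f" "f \<otimes> e = f" using f(1) unfolding C_def by auto
    have gc: "g \<in> carrier R" "e \<otimes> g = g" "g \<otimes> e = g" using g(1) unfolding C_def by auto
    have "right_summand R (sum_set R ((\<lambda>r. f \<otimes> r) ` carrier R) ((\<lambda>r. g \<otimes> r) ` carrier R))"
      using ssp unfolding right_SSP_def using cF.summand_gen fc gc f g rsR by blast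
    then obtain h where h: "h \<in> carrier R" "h \<otimes> h = h"
      and hR: "sum_set R ((\<lambda>r. f \<otimes> r) ` carrier R) ((\<lambda>r. g \<otimes> r) ` carrier R) = (\<lambda>r. h \<otimes> r) ` carrier R"
      using cF.idem rsR by blast
    have "h \<in> (\<lambda>r. h \<otimes> r) ` carrier R" using h by (auto intro!: image_eqI[of _ _ \<one>])
    then obtain a b where ab: "a \<in> carrier R" "b \<in> carrier R" "h = f \<otimes> a \<oplus> g \<otimes> b"
      unfolding hR[symmetric] sum_set_def by blast
    have eh: "e \<otimes> h = h" using ab fc gc e by (simp add: r_distr m_assoc[symmetric])
    have hf: "h \<otimes> f = f"
    proof -
      have "f \<in> sum_set R ((\<lambda>r. f \<otimes> r) ` carrier R) ((\<lambda>r. g \<otimes> r) ` carrier R)"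
      proof -
        have "f = f \<otimes> \<one> \<oplus> g \<otimes> \<zero>" using fc gc by simp
        moreover have "f \<otimes> \<one> \<in> (\<lambda>r. f \<otimes> r) ` carrier R" "g \<otimes> \<zero> \<in> (\<lambda>r. g \<otimes> r) ` carrier R" by auto
        ultimately show ?thesis unfolding sum_set_def by blast
      qed
      then obtain r where "r \<in> carrier R" "f = h \<otimes> r" using hR by auto
      thus ?thesis using h by (simp add: m_assoc[symmetric])
    qed
    have hg: "h \<otimes> g = g"
    proof -
      have "g \<in> sum_set R ((\<lambda>r. f \<otimes> r) ` carrier R) ((\<lambda>r. g \<otimes> r) ` carrier R)"
      proof -
        have "g = f \<otimes> \<zero> \<oplus> g \<otimes> \<one>" using fc gc by simp
        moreover have "f \<otimes> \<zero> \<in> (\<lambda>r. f \<otimes> r) ` carrier R" "g \<otimes> \<one> \<in> (\<lambda>r. g \<otimes> r) ` carrier R" by auto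
        ultimately show ?thesis unfolding sum_set_def by blast
      qed
      then obtain r where "r \<in> carrier R" "g = h \<otimes> r" using hR by auto
      thus ?thesis using h by (simp add: m_assoc[symmetric])
    qed
    define k where "k = h \<otimes> e"
    have kC: "k \<in> C" unfolding k_def C_def using h e ee eh
      by (auto simp: m_assoc[symmetric]) (simp add: m_assoc)
    have kk: "k \<otimes> k = k" unfolding k_def using h e ee eh
      by (simp add: m_assoc) (simp add: m_assoc[symmetric])
    have "sum_set R A B = (\<lambda>r. k \<otimes> r) ` C"
    proof (intro equalityI subsetI)
      fix x assume "x \<in> sum_set R A B"
      then obtain c d where cd: "c \<in> C" "d \<in> C" "x = f \<otimes> c \<oplus> g \<otimes> d"
        unfolding sum_set_def f g by blast
      have cdr: "c \<in> carrier R" "d \<in> carrier R" using cd C_def by auto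
      have xC: "x \<in> C" using cd f g cC.C_mult additive_subgroup.a_closed[OF cC.C_sub] by auto
      have hef: "h \<otimes> e \<otimes> f = f" "h \<otimes> e \<otimes> g = g" using h e fc gc hf hg by (simp_all add: m_assoc)
      have "k \<otimes> x = x" unfolding cd(3) k_def using h e fc gc cdr hef
        by (simp add: r_distr m_assoc[symmetric])
      thus "x \<in> (\<lambda>r. k \<otimes> r) ` C" using xC by (metis image_eqI)
    next
      fix x assume "x \<in> (\<lambda>r. k \<otimes> r) ` C"
      then obtain c where c: "c \<in> C" "x = k \<otimes> c" by blast
      have cr: "c \<in> carrier R" "e \<otimes> c = c" "c \<otimes> e = c" using c C_def by auto
      have aC: "e \<otimes> a \<otimes> e \<otimes> c \<in> C" "e \<otimes> b \<otimes> e \<otimes> c \<in> C"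
      proof -
        have ee2: "\<And>z. z \<in> carrier R \<Longrightarrow> e \<otimes> (e \<otimes> z) = e \<otimes> z" using e ee by (simp add: m_assoc[symmetric])
        show "e \<otimes> a \<otimes> e \<otimes> c \<in> C" "e \<otimes> b \<otimes> e \<otimes> c \<in> C"
          unfolding C_def using ab cr e ee ee2 by (auto simp: m_assoc)
      qed
      have "x = f \<otimes> (e \<otimes> a \<otimes> e \<otimes> c) \<oplus> g \<otimes> (e \<otimes> b \<otimes> e \<otimes> c)"
        unfolding c(2) k_def ab(3) using ab cr e fc gc
        by (simp add: l_distr m_assoc[symmetric])
      thus "x \<in> sum_set R A B" unfolding sum_set_def f g using aC by blast
    qed
    thus "right_summand (corner R e) (sum_set (corner R e) A B)"
      unfolding rsS using cC.summand_gen[OF kC kk] by (simp add: sum_set_def S)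
  qed
qed


definition opp :: "('a, 'b) ring_scheme \<Rightarrow> ('a, 'b) ring_scheme" where
  "opp R = R\<lparr>mult := (\<lambda>x y. y \<otimes>\<^bsub>R\<^esub> x)\<rparr>"

lemma asg_opp: "additive_subgroup I (opp R) \<longleftrightarrow> additive_subgroup I R"
  unfolding additive_subgroup_def opp_def by simp

lemma ring_opp:
  fixes R (structure)
  assumes "ring R"
  shows "ring (opp R)"
proof -
  interpret ring R by fact
  have ag: "abelian_group R" by (rule is_abelian_group)
  show ?thesis
  proof (rule ringI)
    show "abelian_group (opp R)" using ag
      unfolding abelian_group_def abelian_monoid_def abelian_group_axioms_def opp_def by simp
    show "monoid (opp R)"
      by (rule monoidI) (auto simp: opp_def m_assoc)
  qed (auto simp: opp_def l_distr r_distr)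
qed

lemma left_right_opp: "left_summand R I \<longleftrightarrow> right_summand (opp R) I"
  unfolding left_summand_def right_summand_def left_ideal_of_def right_ideal_of_def asg_opp
  by (simp add: opp_def sum_set_def)

lemma left_SSP_opp: "left_SSP R \<longleftrightarrow> right_SSP (opp R)"
  unfolding left_SSP_def right_SSP_def left_right_opp
  by (simp add: opp_def sum_set_def)

lemma corner_opp:
  fixes R (structure)
  assumes "ring R" "e \<in> carrier R"
  shows "corner (opp R) e = opp (corner R e)"
proof -
  interpret ring R by fact
  have "{e \<otimes>\<^bsub>opp R\<^esub> x \<otimes>\<^bsub>opp R\<^esub> e | x. x \<in> carrier (opp R)} = {e \<otimes> x \<otimes> e | x. x \<in> carrier R}"
    using assms(2) by (auto simp: opp_def m_assoc) (metis m_assoc)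
  thus ?thesis unfolding corner_def opp_def by simp
qed

theorem theorem2p11:
  fixes R (structure) and e :: 'a
  assumes "ring R"
    and "e \<in> carrier R"
    and "e \<otimes> e = e"
    and "SSP R"
  shows "SSP (corner R e)"
proof -
  have r: "right_SSP R" and l: "left_SSP R" using assms(4) unfolding SSP_def by auto
  have "right_SSP (corner R e)" by (rule right_main[OF assms(1-3) r])
  moreover have "right_SSP (corner (opp R) e)"
    by (rule right_main[OF ring_opp[OF assms(1)]])
       (use assms(2,3) l in \<open>auto simp: opp_def left_SSP_opp\<close>)
  hence "left_SSP (corner R e)" unfolding corner_opp[OF assms(1,2)] left_SSP_opp .
  ultimately show ?thesis unfolding SSP_def by simp
qed

end
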